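(* For $n\ge 1$ and all $k\ge 0$, $$P(n+1,k)=(n+1-k)S(n,k),$$ equivalently $P_{n+1}(x)=(n+1)S_n(x)-xS_n'(x)$. Furthermore, for $n\ge1$ and $0\le k\le\lfloor n/2\rfloor$, $$P(n+1,k)=\frac{(k+1)(n-k+1)}{n-k}P(n,k)+(n-2k+1)P(n,k-1).$$ In particular, $P(n,0)=n$ and $P(n,1)=(n-1)(2^{n-1}-n)$ for $n\ge 1$.
   Context: For a permutation $\pi$ of $[n]=\{1,\dots,n\}$, ${\rm des}(\pi)=\#\{i\in[n-1]:\pi(i)>\pi(i+1)\}$. A double descent is an index $i\in[n-2]$ with $\pi(i)>\pi(i+1)>\pi(i+2)$; $\pi$ is simsun if for every $k\in[n]$ the subword of $\pi$ consisting of the letters in $[k]$ (in order of appearance) has no double descents. Let $\mathcal{RS}_n$ be the set of simsun permutations of $[n]$, $S(n,k)=\#\{\pi\in\mathcal{RS}_n:{\rm des}(\pi)=k\}$, $S_n(x)=\sum_kS(n,k)x^k$. An interior peak of $\pi$ is an index $i\in\{2,\dots,n-1\}$ with $\pi(i-1)<\pi(i)>\pi(i+1)$; ${\rm pk}(\pi)$ is their number. Let $P(n,k)=\#\{\pi\in\mathcal{RS}_n:{\rm pk}(\pi)=k\}$ (with $P(n,-1)=0$) and $P_n(x)=\sum_kP(n,k)x^k$. *)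

theory Defs
  imports Complex_Main "HOL-Computational_Algebra.Polynomial"
begin

text \<open>Permutations of [n] = {1..n} in one-line notation, as lists (0-based positions).\<close>
definition perms_of :: "nat \<Rightarrow> nat list set" where
  "perms_of n = {xs. distinct xs \<and> set xs = {1..n}}"

definition des :: "nat list \<Rightarrow> nat" where
  "des xs = card {i. i + 1 < length xs \<and> xs ! i > xs ! (i + 1)}"

definition has_double_descent :: "nat list \<Rightarrow> bool" where
  "has_double_descent xs \<longleftrightarrow>
     (\<exists>i. i + 2 < length xs \<and> xs ! i > xs ! (i + 1) \<and> xs ! (i + 1) > xs ! (i + 2))"

definition simsun :: "nat \<Rightarrow> nat list \<Rightarrow> bool" where
  "simsun n xs \<longleftrightarrow> (\<forall>k\<in>{1..n}. \<not> has_double_descent (filter (\<lambda>x. x \<le> k) xs))"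

definition RS :: "nat \<Rightarrow> nat list set" where
  "RS n = {xs \<in> perms_of n. simsun n xs}"

definition pk :: "nat list \<Rightarrow> nat" where
  "pk xs = card {i. 0 < i \<and> i + 1 < length xs \<and> xs ! (i - 1) < xs ! i \<and> xs ! i > xs ! (i + 1)}"

definition S :: "nat \<Rightarrow> nat \<Rightarrow> nat" where
  "S n k = card {xs \<in> RS n. des xs = k}"

definition P :: "nat \<Rightarrow> nat \<Rightarrow> nat" where
  "P n k = card {xs \<in> RS n. pk xs = k}"

text \<open>P(n,k-1) with the convention P(n,-1) = 0.\<close>
definition Pprev :: "nat \<Rightarrow> nat \<Rightarrow> nat" where
  "Pprev n k = (if k = 0 then 0 else P n (k - 1))"

definition S_poly :: "nat \<Rightarrow> int poly" where
  "S_poly n = (\<Sum>k\<le>n. monom (int (S n k)) k)"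

definition P_poly :: "nat \<Rightarrow> int poly" where
  "P_poly n = (\<Sum>k\<le>n. monom (int (P n k)) k)"

end

theory Submission
  imports Defs
begin


definition ins :: "nat list \<Rightarrow> nat \<Rightarrow> nat \<Rightarrow> nat list" where
  "ins xs j m = take j xs @ m # drop j xs"

definition allowed :: "nat list \<Rightarrow> nat \<Rightarrow> bool" where
  "allowed xs j \<longleftrightarrow> \<not> (j + 1 < length xs \<and> xs ! j > xs ! (j + 1))"

definition fd :: "nat list \<Rightarrow> bool" where
  "fd xs \<longleftrightarrow> 1 < length xs \<and> xs ! 0 > xs ! 1"

lemma ins_length: "j \<le> length xs \<Longrightarrow> length (ins xs j m) = Suc (length xs)"
  by (simp add: ins_def)

lemma ins_nth: "j \<le> length xs \<Longrightarrow> i \<le> length xs \<Longrightarrow>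
   ins xs j m ! i = (if i < j then xs ! i else if i = j then m else xs ! (i - 1))"
proof -
  assume a: "j \<le> length xs" "i \<le> length xs"
  consider "i < j" | "i = j" | "j < i" by linarith
  then show ?thesis
  proof cases
    case 1 then show ?thesis using a by (simp add: ins_def nth_append)
  next
    case 2 then show ?thesis using a by (simp add: ins_def nth_append)
  next
    case 3
    define d where "d = i - j - 1"
    have d: "i = j + Suc d" using 3 by (simp add: d_def)
    show ?thesis using a 3 unfolding d ins_def by (simp add: nth_append)
  qed
qed

lemma finite_RS: "finite (RS n)"
proof -
  have "RS n \<subseteq> {xs. set xs \<subseteq> {1..n} \<and> length xs = n}"
    by (auto simp: RS_def perms_of_def dest: distinct_card)
  moreover have "finite {xs. set xs \<subseteq> {1..n} \<and> length xs = (n::nat)}"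
    by (rule finite_lists_length_eq) simp
  ultimately show ?thesis by (rule finite_subset)
qed

lemma RS_length: "xs \<in> RS n \<Longrightarrow> length xs = n"
  by (auto simp: RS_def perms_of_def dest: distinct_card)

lemma simsun_Suc:
  assumes "set xs \<subseteq> {1..Suc n}"
  shows "simsun (Suc n) xs \<longleftrightarrow> simsun n (filter (\<lambda>x. x \<le> n) xs) \<and> \<not> has_double_descent xs"
proof -
  have f: "filter (\<lambda>x. x \<le> Suc n) xs = xs" using assms by (intro filter_True) auto
  have g: "\<And>k. k \<le> n \<Longrightarrow> filter (\<lambda>x. x \<le> k) (filter (\<lambda>x. x \<le> n) xs) = filter (\<lambda>x. x \<le> k) xs"
    by (auto simp: filter_filter intro: filter_cong)
  show ?thesis
  proof
    assume h: "simsun (Suc n) xs"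
    have "Suc n \<in> {1..Suc n}" by simp
    then have "\<not> has_double_descent (filter (\<lambda>x. x \<le> Suc n) xs)" using h unfolding simsun_def by blast
    then have "\<not> has_double_descent xs" using f by simp
    moreover have "simsun n (filter (\<lambda>x. x \<le> n) xs)" unfolding simsun_def
    proof
      fix k assume "k \<in> {1..n}"
      then show "\<not> has_double_descent (filter (\<lambda>x. x \<le> k) (filter (\<lambda>x. x \<le> n) xs))"
      proof -
        have "k \<in> {1..Suc n}" using \<open>k \<in> {1..n}\<close> by auto
        then have "\<not> has_double_descent (filter (\<lambda>x. x \<le> k) xs)" using h unfolding simsun_def by blast
        then show ?thesis using g[of k] \<open>k \<in> {1..n}\<close> by auto
      qed
    qed
    ultimately show "simsun n (filter (\<lambda>x. x \<le> n) xs) \<and> \<not> has_double_descent xs" by blast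
  next
    assume h: "simsun n (filter (\<lambda>x. x \<le> n) xs) \<and> \<not> has_double_descent xs"
    show "simsun (Suc n) xs" unfolding simsun_def
    proof
      fix k assume k: "k \<in> {1..Suc n}"
      show "\<not> has_double_descent (filter (\<lambda>x. x \<le> k) xs)"
      proof (cases "k = Suc n")
        case True then show ?thesis using h f by simp
      next
        case False then have "k \<in> {1..n}" using k by auto
        then have "\<not> has_double_descent (filter (\<lambda>x. x \<le> k) (filter (\<lambda>x. x \<le> n) xs))"
          using h unfolding simsun_def by blast
        then show ?thesis using g[of k] \<open>k \<in> {1..n}\<close> by auto
      qed
    qed
  qed
qed


lemma simsun_nodd: assumes "simsun n xs" "set xs \<subseteq> {1..n}" shows "\<not> has_double_descent xs"
proof (cases "n = 0")
  case True then have "xs = []" using assms by auto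
  then show ?thesis by (simp add: has_double_descent_def)
next
  case False then have "n \<in> {1..n}" by simp
  then have "\<not> has_double_descent (filter (\<lambda>x. x \<le> n) xs)" using assms unfolding simsun_def by blast
  moreover have "filter (\<lambda>x. x \<le> n) xs = xs" using assms(2) by (intro filter_True) auto
  ultimately show ?thesis by simp
qed

lemma dd_ins:
  assumes j: "j \<le> length xs" and m: "\<forall>x\<in>set xs. x < m" and nd: "\<not> has_double_descent xs"
  shows "has_double_descent (ins xs j m) \<longleftrightarrow> \<not> allowed xs j"
proof
  assume "has_double_descent (ins xs j m)"
  then obtain i where i: "i + 2 < Suc (length xs)" "ins xs j m ! i > ins xs j m ! (i+1)"
     "ins xs j m ! (i+1) > ins xs j m ! (i+2)"
    unfolding has_double_descent_def using ins_length[OF j] by auto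
  have lt: "\<And>k. k < length xs \<Longrightarrow> xs ! k < m" using m by auto
  consider "i + 2 < j" | "i + 2 = j" | "i + 1 = j" | "i = j" | "j < i" by linarith
  then show "\<not> allowed xs j"
  proof cases
    case 1 then show ?thesis using i nd j unfolding has_double_descent_def by (auto simp: ins_nth)
  next
    case 2 then show ?thesis using i j lt[of "i+1"] by (auto simp: ins_nth)
  next
    case 3 then show ?thesis using i j lt[of "i"] by (auto simp: ins_nth)
  next
    case 4 then show ?thesis using i j unfolding allowed_def by (auto simp: ins_nth)
  next
    case 5
    have "xs ! (i-1) > xs ! i" "xs ! i > xs ! (i+1)" using i j 5 by (auto simp: ins_nth)
    moreover have "(i - 1) + 2 < length xs" using i 5 by auto
    moreover have "i - 1 + 1 = i" "i - 1 + 2 = i + 1" using 5 by auto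
    ultimately have "has_double_descent xs" unfolding has_double_descent_def
      by (intro exI[of _ "i - 1"]) simp
    then show ?thesis using nd by blast
  qed
next
  assume "\<not> allowed xs j"
  then have a: "j + 1 < length xs" "xs ! j > xs ! (j+1)" unfolding allowed_def by auto
  have "xs ! j < m" using m a by auto
  then show "has_double_descent (ins xs j m)" unfolding has_double_descent_def
    using a ins_length[OF j]
    by (intro exI[of _ j]) (auto simp: ins_nth)
qed

lemma perms_ins:
  assumes "xs \<in> perms_of n" "j \<le> n"
  shows "ins xs j (Suc n) \<in> perms_of (Suc n)"
proof -
  have d: "distinct xs" "set xs = {1..n}" using assms unfolding perms_of_def by auto
  have tdu: "set (take j xs) \<union> set (drop j xs) = set xs"
    by (metis append_take_drop_id set_append)
  have s1: "set (ins xs j (Suc n)) = insert (Suc n) (set xs)"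
    unfolding ins_def using tdu by auto
  have nm: "Suc n \<notin> set xs" using d by auto
  have dd: "distinct (take j xs @ drop j xs)" using d by simp
  then have "distinct (take j xs)" "distinct (drop j xs)" "set (take j xs) \<inter> set (drop j xs) = {}"
    by (simp_all only: distinct_append)
  moreover have "Suc n \<notin> set (take j xs)" "Suc n \<notin> set (drop j xs)"
    using nm by (auto dest: in_set_takeD in_set_dropD)
  ultimately have "distinct (ins xs j (Suc n))" unfolding ins_def by (simp add: distinct_append)
  moreover have "set (ins xs j (Suc n)) = {1..Suc n}" using s1 d(2) by auto
  ultimately show ?thesis unfolding perms_of_def by auto
qed

lemma filter_ins:
  assumes "set xs \<subseteq> {..n}" shows "filter (\<lambda>x. x \<le> n) (ins xs j (Suc n)) = xs"
proof -
  have "filter (\<lambda>x. x \<le> n) (take j xs) = take j xs"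
    using assms by (intro filter_True) (auto dest: in_set_takeD)
  moreover have "filter (\<lambda>x. x \<le> n) (drop j xs) = drop j xs"
    using assms by (intro filter_True) (auto dest: in_set_dropD)
  ultimately show ?thesis unfolding ins_def by simp
qed

lemma RS_Suc_eq:
  "RS (Suc n) = (\<lambda>(xs,j). ins xs j (Suc n)) ` (SIGMA xs:RS n. {j. j \<le> n \<and> allowed xs j})"
proof
  show "(\<lambda>(xs,j). ins xs j (Suc n)) ` (SIGMA xs:RS n. {j. j \<le> n \<and> allowed xs j}) \<subseteq> RS (Suc n)"
  proof clarify
    fix xs j assume xs: "xs \<in> RS n" and j: "j \<le> n" "allowed xs j"
    have p: "xs \<in> perms_of n" "simsun n xs" using xs unfolding RS_def by auto
    have st: "set xs = {1..n}" "distinct xs" using p unfolding perms_of_def by auto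
    have L: "length xs = n" using xs by (rule RS_length)
    have pi: "ins xs j (Suc n) \<in> perms_of (Suc n)" using perms_ins p j by blast
    have nd: "\<not> has_double_descent xs" using simsun_nodd p st by auto
    have lt: "\<forall>x\<in>set xs. x < Suc n" using st(1) by auto
    have jl: "j \<le> length xs" using j L by simp
    have "has_double_descent (ins xs j (Suc n)) \<longleftrightarrow> \<not> allowed xs j" by (rule dd_ins[OF jl lt nd])
    then have "\<not> has_double_descent (ins xs j (Suc n))" using j(2) by blast
    moreover have "filter (\<lambda>x. x \<le> n) (ins xs j (Suc n)) = xs" using st by (intro filter_ins) auto
    moreover have "set (ins xs j (Suc n)) \<subseteq> {1..Suc n}" using pi unfolding perms_of_def by auto
    ultimately have "simsun (Suc n) (ins xs j (Suc n))" using simsun_Suc p by auto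
    then show "ins xs j (Suc n) \<in> RS (Suc n)" using pi unfolding RS_def by auto
  qed
next
  show "RS (Suc n) \<subseteq> (\<lambda>(xs,j). ins xs j (Suc n)) ` (SIGMA xs:RS n. {j. j \<le> n \<and> allowed xs j})"
  proof
    fix ps assume ps: "ps \<in> RS (Suc n)"
    have d: "distinct ps" "set ps = {1..Suc n}" "simsun (Suc n) ps" using ps unfolding RS_def perms_of_def by auto
    then have "Suc n \<in> set ps" by auto
    then obtain ys zs where yz: "ps = ys @ Suc n # zs" by (meson split_list)
    have nin: "Suc n \<notin> set ys" "Suc n \<notin> set zs" using d(1) yz by auto
    define xs where "xs = ys @ zs"
    have fl: "filter (\<lambda>x. x \<le> n) ps = xs"
    proof -
      have "filter (\<lambda>x. x \<le> n) ys = ys" using d(2) nin unfolding yz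
        by (intro filter_True) (auto simp: le_Suc_eq)
      moreover have "filter (\<lambda>x. x \<le> n) zs = zs" using d(2) nin unfolding yz
        by (intro filter_True) (auto simp: le_Suc_eq)
      ultimately show ?thesis unfolding yz xs_def by simp
    qed
    have ss: "simsun n xs" "\<not> has_double_descent ps" using simsun_Suc[of ps n] d fl by auto
    have dx: "distinct xs" using d(1) unfolding yz xs_def by auto
    have sx: "set xs = {1..n}"
    proof -
      have "set ps = insert (Suc n) (set xs)" unfolding yz xs_def by auto
      moreover have "Suc n \<notin> set xs" using nin unfolding xs_def by auto
      ultimately have "set xs = set ps - {Suc n}" by auto
      also have "\<dots> = {1..Suc n} - {Suc n}" using d(2) by simp
      also have "\<dots> = {1..n}" by auto
      finally show ?thesis .
    qed
    have xsRS: "xs \<in> RS n" using ss dx sx unfolding RS_def perms_of_def by auto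
    have L: "length xs = n" using RS_length[OF xsRS] .
    have j: "length ys \<le> n" using L unfolding xs_def by simp
    have insy: "ins xs (length ys) (Suc n) = ps" unfolding ins_def xs_def yz by simp
    have nd: "\<not> has_double_descent xs" using simsun_nodd ss sx by auto
    have lt: "\<forall>x\<in>set xs. x < Suc n" using sx by auto
    have jl: "length ys \<le> length xs" using j L by simp
    have "has_double_descent (ins xs (length ys) (Suc n)) \<longleftrightarrow> \<not> allowed xs (length ys)" by (rule dd_ins[OF jl lt nd])
    then have "allowed xs (length ys)" using ss(2) insy by simp
    show "ps \<in> (\<lambda>(xs,j). ins xs j (Suc n)) ` (SIGMA xs:RS n. {j. j \<le> n \<and> allowed xs j})"
    proof (rule rev_image_eqI[of "(xs, length ys)"])
      show "(xs, length ys) \<in> (SIGMA xs:RS n. {j. j \<le> n \<and> allowed xs j})"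
        using xsRS j \<open>allowed xs (length ys)\<close> by simp
      show "ps = (\<lambda>(xs,j). ins xs j (Suc n)) (xs, length ys)" using insy by simp
    qed
  qed
qed

lemma inj_ins:
  "inj_on (\<lambda>(xs,j). ins xs j (Suc n)) (SIGMA xs:RS n. {j. j \<le> n \<and> allowed xs j})"
proof (rule inj_onI, clarify)
  fix xs j xs' j'
  assume a: "xs \<in> RS n" "j \<le> n" "xs' \<in> RS n" "j' \<le> n" "ins xs j (Suc n) = ins xs' j' (Suc n)"
  have s: "set xs = {1..n}" "set xs' = {1..n}" "length xs = n" "length xs' = n"
    using a RS_length unfolding RS_def perms_of_def by auto
  have n1: "Suc n \<notin> set (take j xs)" "Suc n \<notin> set (drop j xs)"
    using s by (auto dest: in_set_takeD in_set_dropD)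
  have "take j xs = take j' xs' \<and> drop j xs = drop j' xs'"
    using a(5) append_Cons_eq_iff[OF n1] unfolding ins_def by blast
  then have tt: "take j xs = take j' xs'" "drop j xs = drop j' xs'" by auto
  have "length (take j xs) = j" "length (take j' xs') = j'" using s a by auto
  then have "j = j'" using tt by simp
  moreover have "xs = xs'" using tt by (metis append_take_drop_id)
  ultimately show "xs = xs' \<and> j = j'" by simp
qed




definition pkset :: "nat list \<Rightarrow> nat set" where
  "pkset xs = {i. 0 < i \<and> i + 1 < length xs \<and> xs ! (i - 1) < xs ! i \<and> xs ! i > xs ! (i + 1)}"

definition desset :: "nat list \<Rightarrow> nat set" where
  "desset xs = {i. i + 1 < length xs \<and> xs ! i > xs ! (i + 1)}"

lemma pk_eq: "pk xs = card (pkset xs)" by (simp add: pk_def pkset_def)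
lemma des_eq: "des xs = card (desset xs)" by (simp add: des_def desset_def)

lemma pkset_sub: "pkset xs \<subseteq> {1..<length xs}" unfolding pkset_def by auto
lemma desset_sub: "desset xs \<subseteq> {..<length xs}" unfolding desset_def by auto
lemma finite_pkset: "finite (pkset xs)" using pkset_sub by (rule finite_subset) simp
lemma finite_desset: "finite (desset xs)" using desset_sub by (rule finite_subset) simp

lemma desset_eq:
  assumes d: "distinct xs" and nd: "\<not> has_double_descent xs"
  shows "desset xs = pkset xs \<union> (if fd xs then {0} else {})"
proof (rule set_eqI)
  fix i
  show "i \<in> desset xs \<longleftrightarrow> i \<in> pkset xs \<union> (if fd xs then {0} else {})"
  proof (cases "i = 0")
    case True then show ?thesis unfolding desset_def pkset_def fd_def by auto
  next
    case False
    have "i \<in> desset xs \<Longrightarrow> xs ! (i - 1) < xs ! i"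
    proof -
      assume a: "i \<in> desset xs"
      then have a1: "i + 1 < length xs" "xs ! i > xs ! (i + 1)" unfolding desset_def by auto
      have ne: "xs ! (i - 1) \<noteq> xs ! i"
        using d a1 False by (simp add: nth_eq_iff_index_eq)
      have e: "i - 1 + 1 = i" "i - 1 + 2 = i + 1" using False by auto
      show ?thesis
      proof (rule ccontr)
        assume "\<not> xs ! (i - 1) < xs ! i"
        then have "xs ! (i - 1) > xs ! i" using ne by simp
        then have "has_double_descent xs" unfolding has_double_descent_def
          using a1 e by (intro exI[of _ "i - 1"]) simp
        then show False using nd by blast
      qed
    qed
    then show ?thesis using False unfolding desset_def pkset_def by auto
  qed
qed

lemma des_pk:
  assumes d: "distinct xs" and nd: "\<not> has_double_descent xs"
  shows "des xs = pk xs + (if fd xs then 1 else 0)"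
proof -
  have "0 \<notin> pkset xs" unfolding pkset_def by auto
  then show ?thesis unfolding des_eq pk_eq desset_eq[OF d nd]
    using finite_pkset by auto
qed

lemma pkset_ins:
  assumes j: "j \<le> length xs" and m: "\<forall>x\<in>set xs. x < m"
  shows "pkset (ins xs j m) = {i\<in>pkset xs. i + 1 < j} \<union> Suc ` {i\<in>pkset xs. j < i}
           \<union> (if 0 < j \<and> j < length xs then {j} else {})"
    (is "?L = ?A \<union> ?B \<union> ?C")
proof (rule set_eqI)
  fix i
  let ?t = "ins xs j m"
  have lt: "\<And>k. k < length xs \<Longrightarrow> xs ! k < m" using m by auto
  have len: "length ?t = Suc (length xs)" using ins_length[OF j] .
  have tn: "\<And>k. k \<le> length xs \<Longrightarrow> ?t ! k = (if k < j then xs ! k else if k = j then m else xs ! (k - 1))"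
    using ins_nth[OF j] by blast
  show "i \<in> ?L \<longleftrightarrow> i \<in> ?A \<union> ?B \<union> ?C"
  proof
    assume "i \<in> ?L"
    then have h: "0 < i" "i + 1 < Suc (length xs)" "?t ! (i - 1) < ?t ! i" "?t ! i > ?t ! (i + 1)"
      unfolding pkset_def len by auto
    consider "i + 1 < j" | "i + 1 = j" | "i = j" | "i = j + 1" | "j + 1 < i" by linarith
    then show "i \<in> ?A \<union> ?B \<union> ?C"
    proof cases
      case 1
      have e1: "?t ! (i - 1) = xs ! (i - 1)" using tn[of "i-1"] 1 h by simp
      have e2: "?t ! i = xs ! i" using tn[of "i"] 1 h by simp
      have e3: "?t ! (i + 1) = xs ! (i + 1)" using tn[of "i+1"] 1 h by simp
      have "xs ! (i - 1) < xs ! i" "xs ! i > xs ! (i + 1)" using h e1 e2 e3 by auto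
      then show ?thesis using 1 h j unfolding pkset_def by auto
    next
      case 2
      then have "?t ! (i + 1) = m" "?t ! i = xs ! i" using tn[of i] tn[of "i+1"] h by auto
      then show ?thesis using h lt[of i] 2 j by auto
    next
      case 3 then show ?thesis using h by auto
    next
      case 4
      then have "?t ! (i - 1) = m" "?t ! i = xs ! j" using tn[of j] tn[of "j+1"] h by auto
      then show ?thesis using h lt[of j] 4 by auto
    next
      case 5
      define i' where "i' = i - 1"
      have ii: "i = Suc i'" "j < i'" using 5 by (auto simp: i'_def)
      have "?t ! (i - 1) = xs ! (i' - 1)" "?t ! i = xs ! i'" "?t ! (i + 1) = xs ! (i' + 1)"
        using tn[of "i - 1"] tn[of i] tn[of "i + 1"] h ii by auto
      then have "i' \<in> pkset xs" using h ii unfolding pkset_def by auto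
      then show ?thesis using ii by auto
    qed
  next
    assume "i \<in> ?A \<union> ?B \<union> ?C"
    then consider "i \<in> ?A" | "i \<in> ?B" | "i \<in> ?C" by blast
    then show "i \<in> ?L"
    proof cases
      case 1
      then have h: "0 < i" "i + 1 < length xs" "xs ! (i - 1) < xs ! i" "xs ! i > xs ! (i + 1)" "i + 1 < j"
        unfolding pkset_def by auto
      then have "?t ! (i - 1) = xs ! (i - 1)" "?t ! i = xs ! i" "?t ! (i + 1) = xs ! (i + 1)"
        using tn[of "i-1"] tn[of i] tn[of "i+1"] by auto
      then show ?thesis using h len unfolding pkset_def by auto
    next
      case 2
      then obtain i' where ii: "i = Suc i'" "i' \<in> pkset xs" "j < i'" by auto
      then have h: "0 < i'" "i' + 1 < length xs" "xs ! (i' - 1) < xs ! i'" "xs ! i' > xs ! (i' + 1)"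
        unfolding pkset_def by auto
      then have "?t ! (i - 1) = xs ! (i' - 1)" "?t ! i = xs ! i'" "?t ! (i + 1) = xs ! (i' + 1)"
        using tn[of "i - 1"] tn[of i] tn[of "i + 1"] ii by auto
      then show ?thesis using h ii len unfolding pkset_def by auto
    next
      case 3
      then have h: "i = j" "0 < j" "j < length xs" by (auto split: if_splits)
      then have "?t ! (i - 1) = xs ! (j - 1)" "?t ! i = m" "?t ! (i + 1) = xs ! j"
        using tn[of "j - 1"] tn[of j] tn[of "j + 1"] by auto
      moreover have "xs ! (j - 1) < m" "xs ! j < m" using lt h by auto
      ultimately show ?thesis using h len unfolding pkset_def by auto
    qed
  qed
qed

lemma pk_ins:
  assumes j: "j \<le> length xs" and m: "\<forall>x\<in>set xs. x < m" and d: "distinct xs"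
    and nd: "\<not> has_double_descent xs" and al: "allowed xs j"
  shows "pk (ins xs j m) + (if j \<in> Suc ` pkset xs then 1 else 0)
         = pk xs + (if 0 < j \<and> j < length xs then 1 else 0)"
proof -
  let ?P = "pkset xs"
  define A where "A = {i\<in>?P. i + 1 < j}"
  define B where "B = {i\<in>?P. j < i}"
  define C where "C = (if 0 < j \<and> j < length xs then {j} else {})"
  define D where "D = {i\<in>?P. Suc i = j}"
  have jn: "j \<notin> ?P"
  proof
    assume "j \<in> ?P"
    then have "j \<in> desset xs" using desset_eq[OF d nd] by auto
    then show False using al unfolding allowed_def desset_def by auto
  qed
  have fin: "finite A" "finite B" "finite D" "finite C"
    unfolding A_def B_def D_def C_def using finite_pkset by auto
  have ne: "\<And>x. x \<in> ?P \<Longrightarrow> x + 1 < j \<or> j < x \<or> Suc x = j"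
  proof -
    fix x assume "x \<in> ?P"
    then have "x \<noteq> j" using jn by auto
    then show "x + 1 < j \<or> j < x \<or> Suc x = j" by linarith
  qed
  have Peq: "?P = A \<union> B \<union> D" unfolding A_def B_def D_def using ne by auto
  have cP: "card ?P = card A + card B + card D"
    unfolding Peq using fin by (subst card_Un_disjoint, auto simp: A_def B_def D_def)+
  have inj: "inj_on Suc B" by simp
  have Leq: "pkset (ins xs j m) = A \<union> Suc ` B \<union> C"
    unfolding A_def B_def C_def using pkset_ins[OF j m] by simp
  have cL: "card (pkset (ins xs j m)) = card A + card B + card C"
  proof -
    have "card (A \<union> Suc ` B \<union> C) = card (A \<union> Suc ` B) + card C"
      using fin by (intro card_Un_disjoint) (auto simp: A_def B_def C_def split: if_splits)
    also have "card (A \<union> Suc ` B) = card A + card (Suc ` B)"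
      using fin by (intro card_Un_disjoint) (auto simp: A_def B_def)
    also have "card (Suc ` B) = card B" using inj by (rule card_image)
    finally show ?thesis using Leq by simp
  qed
  have cD: "card D = (if j \<in> Suc ` ?P then 1 else 0)"
  proof (cases "j \<in> Suc ` ?P")
    case True
    then obtain i where "j = Suc i" "i \<in> ?P" by auto
    then have "D = {i}" unfolding D_def by auto
    then show ?thesis using True by simp
  next
    case False
    then have "D = {}" unfolding D_def by auto
    then show ?thesis using False by simp
  qed
  have cC: "card C = (if 0 < j \<and> j < length xs then 1 else 0)" unfolding C_def by simp
  show ?thesis unfolding pk_eq using cP cL cD cC by simp
qed

lemma fd_ins:
  assumes j: "j \<le> length xs" and m: "\<forall>x\<in>set xs. x < m" and L: "1 \<le> length xs"
  shows "fd (ins xs j m) \<longleftrightarrow> (j = 0 \<or> (2 \<le> j \<and> fd xs))"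
proof -
  let ?t = "ins xs j m"
  have lt: "\<And>k. k < length xs \<Longrightarrow> xs ! k < m" using m by auto
  have len: "length ?t = Suc (length xs)" using ins_length[OF j] .
  have tn: "\<And>k. k \<le> length xs \<Longrightarrow> ?t ! k = (if k < j then xs ! k else if k = j then m else xs ! (k - 1))"
    using ins_nth[OF j] by blast
  consider "j = 0" | "j = 1" | "2 \<le> j" by linarith
  then show ?thesis
  proof cases
    case 1
    then have "?t ! 0 = m" "?t ! 1 = xs ! 0" using tn[of 0] tn[of 1] L by auto
    moreover have "xs ! 0 < m" using lt[of 0] L by (cases xs) auto
    ultimately show ?thesis using L len 1 unfolding fd_def by auto
  next
    case 2
    then have "?t ! 0 = xs ! 0" "?t ! 1 = m" using tn[of 0] tn[of 1] L by auto
    moreover have "xs ! 0 < m" using lt[of 0] L by (cases xs) auto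
    ultimately show ?thesis using L len 2 unfolding fd_def by auto
  next
    case 3
    then have "?t ! 0 = xs ! 0" "?t ! 1 = xs ! 1" using tn[of 0] tn[of 1] j by auto
    then show ?thesis using j len 3 unfolding fd_def by auto
  qed
qed




lemma card_Diff_int: "finite A \<Longrightarrow> B \<subseteq> A \<Longrightarrow> int (card (A - B)) = int (card A) - int (card B)"
  by (simp add: card_Diff_subset card_mono finite_subset of_nat_diff)

lemma count_sigma:
  assumes d: "distinct xs" and nd: "\<not> has_double_descent xs" and L: "length xs = n" and n1: "1 \<le> n"
    and m: "\<forall>x\<in>set xs. x < m"
  defines "J \<equiv> {j. j \<le> n \<and> allowed xs j}"
  shows "int (card {j\<in>J. pk (ins xs j m) = q \<and> fd (ins xs j m) = True}) =
           (if fd xs \<and> q = pk xs then int (pk xs) + 1 else 0)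
         + (if fd xs \<and> q = pk xs + 1 then int n - 2 - 2 * int (pk xs) else 0)
         + (if \<not> fd xs \<and> q = pk xs then 1 else 0)"
    and "int (card {j\<in>J. pk (ins xs j m) = q \<and> fd (ins xs j m) = False}) =
           (if fd xs \<and> q = pk xs + 1 then 1 else 0)
         + (if \<not> fd xs \<and> q = pk xs then int (pk xs) + 1 else 0)
         + (if \<not> fd xs \<and> q = pk xs + 1 then int n - 1 - 2 * int (pk xs) else 0)"
proof -
  let ?P = "pkset xs"
  let ?p = "pk xs"
  let ?f = "fd xs"
  define Q where "Q = Suc ` ?P"
  have pP: "?p = card ?P" by (rule pk_eq)
  have Jeq: "J = {0..n} - desset xs"
    unfolding J_def allowed_def desset_def using L by auto
  have dsub: "desset xs \<subseteq> {0..n}" using desset_sub[of xs] L by auto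
  have finJ: "finite J" unfolding Jeq by simp
  have cJ: "int (card J) = int n + 1 - int ?p - (if ?f then 1 else 0)"
  proof -
    have "int (card J) = int (card {0..n}) - int (card (desset xs))"
      unfolding Jeq by (rule card_Diff_int) (simp_all add: dsub)
    moreover have "card (desset xs) = des xs" by (simp add: des_eq)
    ultimately show ?thesis using des_pk[OF d nd] by simp
  qed
  have Psub: "?P \<subseteq> {1..<n - 1}" unfolding pkset_def L by auto
  have deq: "desset xs = ?P \<union> (if ?f then {0} else {})" by (rule desset_eq[OF d nd])
  have QJ: "Q \<subseteq> J"
  proof
    fix j assume "j \<in> Q"
    then obtain i where i: "j = Suc i" "i \<in> ?P" unfolding Q_def by auto
    then have h: "i + 1 < n" "xs ! i > xs ! (i + 1)" unfolding pkset_def L by auto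
    have "j \<notin> desset xs"
    proof
      assume "j \<in> desset xs"
      then have "j + 1 < n" "xs ! j > xs ! (j + 1)" unfolding desset_def L by auto
      then have "has_double_descent xs" unfolding has_double_descent_def using h i L
        by (intro exI[of _ i]) simp
      then show False using nd by blast
    qed
    moreover have "j \<le> n" using h i by simp
    ultimately show "j \<in> J" unfolding Jeq by auto
  qed
  have Qr: "\<And>j. j \<in> Q \<Longrightarrow> 2 \<le> j \<and> j < n" using Psub unfolding Q_def by (auto dest!: subsetD[OF Psub])
  have cQ: "card Q = ?p" unfolding Q_def pP by (rule card_image) simp
  have finQ: "finite Q" using finJ QJ finite_subset by blast
  have nJ: "n \<in> J" unfolding Jeq using dsub desset_sub[of xs] L by auto
  have nQ: "n \<notin> Q" using Qr by auto
  have zJ: "0 \<in> J \<longleftrightarrow> \<not> ?f" unfolding Jeq deq using Psub by auto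
  have oJ: "1 \<in> J \<longleftrightarrow> 1 \<notin> ?P" unfolding Jeq deq using n1 by auto
  have oQ: "1 \<notin> Q" using Qr[of 1] by auto
  have mm: "\<forall>x\<in>set xs. x < m" by (rule m)
  have pkJ: "\<And>j. j \<in> J \<Longrightarrow> pk (ins xs j m) + (if j \<in> Q then 1 else 0) = ?p + (if 0 < j \<and> j < n then 1 else 0)"
  proof -
    fix j assume "j \<in> J"
    then have "j \<le> length xs" "allowed xs j" unfolding J_def L by auto
    then show "pk (ins xs j m) + (if j \<in> Q then 1 else 0) = ?p + (if 0 < j \<and> j < n then 1 else 0)"
      using pk_ins[OF _ m d nd] L unfolding Q_def by simp
  qed
  have fdJ: "\<And>j. j \<in> J \<Longrightarrow> fd (ins xs j m) \<longleftrightarrow> (j = 0 \<or> (2 \<le> j \<and> ?f))"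
  proof -
    fix j assume "j \<in> J"
    then have "j \<le> length xs" unfolding J_def L by auto
    then show "fd (ins xs j m) \<longleftrightarrow> (j = 0 \<or> (2 \<le> j \<and> ?f))"
      using fd_ins[OF _ m] L n1 by simp
  qed
  have pk0: "\<And>j. j \<in> J \<Longrightarrow> 1 \<le> j \<Longrightarrow> (pk (ins xs j m) = ?p \<longleftrightarrow> (j = n \<or> j \<in> Q))"
  proof -
    fix j assume j: "j \<in> J" "1 \<le> j"
    have "j \<le> n" using j unfolding J_def by auto
    then show "pk (ins xs j m) = ?p \<longleftrightarrow> (j = n \<or> j \<in> Q)" using pkJ[OF j(1)] Qr[of j] j
      by (cases "j \<in> Q") auto
  qed
  have pk1: "\<And>j. j \<in> J \<Longrightarrow> 1 \<le> j \<Longrightarrow> (pk (ins xs j m) = ?p + 1 \<longleftrightarrow> (j \<noteq> n \<and> j \<notin> Q))"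
  proof -
    fix j assume j: "j \<in> J" "1 \<le> j"
    have "j \<le> n" using j unfolding J_def by auto
    then show "pk (ins xs j m) = ?p + 1 \<longleftrightarrow> (j \<noteq> n \<and> j \<notin> Q)" using pkJ[OF j(1)] Qr[of j] j
      by (cases "j \<in> Q") auto
  qed
  have pkr: "\<And>j. j \<in> J \<Longrightarrow> pk (ins xs j m) = ?p \<or> pk (ins xs j m) = ?p + 1"
  proof -
    fix j assume j: "j \<in> J"
    show "pk (ins xs j m) = ?p \<or> pk (ins xs j m) = ?p + 1" using pkJ[OF j] Qr[of j]
      by (cases "j \<in> Q"; cases "0 < j \<and> j < n") auto
  qed
  have pkz: "0 \<in> J \<Longrightarrow> pk (ins xs 0 m) = ?p"
  proof -
    assume "0 \<in> J"
    moreover have "0 \<notin> Q" using Qr[of 0] by auto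
    ultimately show ?thesis using pkJ[of 0] by simp
  qed
  show "int (card {j\<in>J. pk (ins xs j m) = q \<and> fd (ins xs j m) = True}) =
           (if ?f \<and> q = ?p then int ?p + 1 else 0)
         + (if ?f \<and> q = ?p + 1 then int n - 2 - 2 * int ?p else 0)
         + (if \<not> ?f \<and> q = ?p then 1 else 0)"
  proof (cases ?f)
    case True
    then have n2: "2 \<le> n" using L unfolding fd_def by auto
    have nz: "\<And>j. j \<in> J \<Longrightarrow> j \<noteq> 0"
    proof
      fix j assume "j \<in> J" "j = 0"
      then show False using zJ True by simp
    qed
    have fdT: "\<And>j. j \<in> J \<Longrightarrow> fd (ins xs j m) \<longleftrightarrow> j \<noteq> 1"
      using fdJ nz True by fastforce
    show ?thesis
    proof (cases "q = ?p")
      case True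
      have "{j\<in>J. pk (ins xs j m) = q \<and> fd (ins xs j m) = True} = insert n Q"
      proof (rule set_eqI)
        fix j
        show "j \<in> {j\<in>J. pk (ins xs j m) = q \<and> fd (ins xs j m) = True} \<longleftrightarrow> j \<in> insert n Q"
        proof
          assume "j \<in> {j\<in>J. pk (ins xs j m) = q \<and> fd (ins xs j m) = True}"
          then have "j \<in> J" "pk (ins xs j m) = ?p" "j \<noteq> 1" using fdT True by auto
          then show "j \<in> insert n Q" using pk0 nz by fastforce
        next
          assume a: "j \<in> insert n Q"
          then have "j \<in> J" "1 \<le> j" "j \<noteq> 1" using nJ QJ Qr[of j] n2 by auto
          then show "j \<in> {j\<in>J. pk (ins xs j m) = q \<and> fd (ins xs j m) = True}"
            using pk0 fdT a True by auto
        qed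
      qed
      then show ?thesis using \<open>?f\<close> True cQ nQ finQ by simp
    next
      case qn: False
      show ?thesis
      proof (cases "q = ?p + 1")
        case True
        have "{j\<in>J. pk (ins xs j m) = q \<and> fd (ins xs j m) = True} = J - ({1, n} \<union> Q)"
        proof (rule set_eqI)
          fix j
          show "j \<in> {j\<in>J. pk (ins xs j m) = q \<and> fd (ins xs j m) = True} \<longleftrightarrow> j \<in> J - ({1, n} \<union> Q)"
          proof
            assume "j \<in> {j\<in>J. pk (ins xs j m) = q \<and> fd (ins xs j m) = True}"
            then have "j \<in> J" "pk (ins xs j m) = ?p + 1" "j \<noteq> 1" using fdT True by auto
            then show "j \<in> J - ({1, n} \<union> Q)" using pk1 nz by fastforce
          next
            assume a: "j \<in> J - ({1, n} \<union> Q)"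
            then have "j \<in> J" "1 \<le> j" "j \<noteq> 1" using nz by fastforce+
            then show "j \<in> {j\<in>J. pk (ins xs j m) = q \<and> fd (ins xs j m) = True}"
              using pk1 fdT a True by auto
          qed
        qed
        moreover have "int (card (J - ({1, n} \<union> Q))) = int (card J) - int (card ({1, n} \<union> Q))"
          using finJ QJ nJ oJ \<open>?f\<close> by (intro card_Diff_int) (auto simp: fd_def pkset_def)
        moreover have "card ({1, n} \<union> Q) = 2 + card Q"
          using finQ oQ nQ n2 by simp
        ultimately show ?thesis using \<open>?f\<close> True cQ cJ by simp
      next
        case False
        have E: "{j\<in>J. pk (ins xs j m) = q \<and> fd (ins xs j m) = True} = {}"
          using pkr qn False by fastforce
        show ?thesis using qn False by (simp only: E) simp
      qed
    qed
  next
    case False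
    have fdF: "\<And>j. j \<in> J \<Longrightarrow> fd (ins xs j m) \<longleftrightarrow> j = 0"
      using fdJ False by fastforce
    have "{j\<in>J. pk (ins xs j m) = q \<and> fd (ins xs j m) = True} = (if q = ?p then {0} else {})"
      using fdF pkz zJ False by auto
    then show ?thesis using False by simp
  qed

  show "int (card {j\<in>J. pk (ins xs j m) = q \<and> fd (ins xs j m) = False}) =
           (if ?f \<and> q = ?p + 1 then 1 else 0)
         + (if \<not> ?f \<and> q = ?p then int ?p + 1 else 0)
         + (if \<not> ?f \<and> q = ?p + 1 then int n - 1 - 2 * int ?p else 0)"
  proof (cases ?f)
    case True
    then have n2: "2 \<le> n" using L unfolding fd_def by auto
    have nz: "\<And>j. j \<in> J \<Longrightarrow> j \<noteq> 0"
    proof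
      fix j assume "j \<in> J" "j = 0"
      then show False using zJ True by simp
    qed
    have fdT: "\<And>j. j \<in> J \<Longrightarrow> fd (ins xs j m) \<longleftrightarrow> j \<noteq> 1"
      using fdJ nz True by fastforce
    have oJJ: "1 \<in> J" using oJ True unfolding fd_def pkset_def by auto
    have pk1': "pk (ins xs 1 m) = ?p + 1" using pk1[OF oJJ] oQ n2 by simp
    have "{j\<in>J. pk (ins xs j m) = q \<and> fd (ins xs j m) = False} = (if q = ?p + 1 then {1} else {})"
      using fdT oJJ pk1' by auto
    then show ?thesis using True by simp
  next
    case False
    have fdF: "\<And>j. j \<in> J \<Longrightarrow> fd (ins xs j m) \<longleftrightarrow> j = 0"
      using fdJ False by fastforce
    have zJJ: "0 \<in> J" using zJ False by simp
    show ?thesis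
    proof (cases "q = ?p")
      case True
      have "{j\<in>J. pk (ins xs j m) = q \<and> fd (ins xs j m) = False} = insert n Q"
      proof (rule set_eqI)
        fix j
        show "j \<in> {j\<in>J. pk (ins xs j m) = q \<and> fd (ins xs j m) = False} \<longleftrightarrow> j \<in> insert n Q"
        proof
          assume "j \<in> {j\<in>J. pk (ins xs j m) = q \<and> fd (ins xs j m) = False}"
          then have "j \<in> J" "pk (ins xs j m) = ?p" "1 \<le> j" using fdF True by auto
          then show "j \<in> insert n Q" using pk0 by fastforce
        next
          assume a: "j \<in> insert n Q"
          then have "j \<in> J" "1 \<le> j" using nJ QJ Qr[of j] n1 by auto
          then show "j \<in> {j\<in>J. pk (ins xs j m) = q \<and> fd (ins xs j m) = False}"
            using pk0 fdF a True by auto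
        qed
      qed
      then show ?thesis using False True cQ nQ finQ by simp
    next
      case qn: False
      show ?thesis
      proof (cases "q = ?p + 1")
        case True
        have "{j\<in>J. pk (ins xs j m) = q \<and> fd (ins xs j m) = False} = J - ({0, n} \<union> Q)"
        proof (rule set_eqI)
          fix j
          show "j \<in> {j\<in>J. pk (ins xs j m) = q \<and> fd (ins xs j m) = False} \<longleftrightarrow> j \<in> J - ({0, n} \<union> Q)"
          proof
            assume "j \<in> {j\<in>J. pk (ins xs j m) = q \<and> fd (ins xs j m) = False}"
            then have "j \<in> J" "pk (ins xs j m) = ?p + 1" "1 \<le> j" using fdF True by auto
            then show "j \<in> J - ({0, n} \<union> Q)" using pk1 by fastforce
          next
            assume a: "j \<in> J - ({0, n} \<union> Q)"
            then have "j \<in> J" "1 \<le> j" by auto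
            then show "j \<in> {j\<in>J. pk (ins xs j m) = q \<and> fd (ins xs j m) = False}"
              using pk1 fdF a True by auto
          qed
        qed
        moreover have "int (card (J - ({0, n} \<union> Q))) = int (card J) - int (card ({0, n} \<union> Q))"
          using finJ QJ nJ zJJ by (intro card_Diff_int) auto
        moreover have "card ({0, n} \<union> Q) = 2 + card Q"
        proof -
          have "0 \<notin> Q" using Qr by fastforce
          then show ?thesis using finQ nQ n1 by simp
        qed
        ultimately show ?thesis using False True cQ cJ by simp
      next
        case False
        have E: "{j\<in>J. pk (ins xs j m) = q \<and> fd (ins xs j m) = False} = {}"
          using pkr qn False by fastforce
        show ?thesis using qn False by (simp only: E) simp
      qed
    qed
  qed
qed




definition A :: "nat \<Rightarrow> nat \<Rightarrow> bool \<Rightarrow> int" where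
  "A n q g = int (card {xs\<in>RS n. pk xs = q \<and> fd xs = g})"

definition Am :: "nat \<Rightarrow> nat \<Rightarrow> bool \<Rightarrow> int" where
  "Am n q g = (if q = 0 then 0 else A n (q - 1) g)"

lemma sum_ind: "finite X \<Longrightarrow> (\<Sum>x\<in>X. if R x then (c::int) else 0) = c * int (card {x\<in>X. R x})"
proof -
  assume f: "finite X"
  have "(\<Sum>x\<in>X. if R x then c else 0) = (\<Sum>x\<in>{x\<in>X. R x}. c)"
    using sum.inter_filter[OF f, of "\<lambda>x. c" R] by simp
  then show ?thesis by (simp add: mult.commute)
qed

lemma Am_card: "int (card {xs\<in>RS n. fd xs = g \<and> pk xs + 1 = q}) = Am n q g"
proof (cases q)
  case 0 then show ?thesis unfolding Am_def by simp
next
  case (Suc r)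
  have "{xs\<in>RS n. fd xs = g \<and> pk xs + 1 = q} = {xs\<in>RS n. pk xs = r \<and> fd xs = g}" using Suc by auto
  then show ?thesis unfolding Am_def A_def using Suc by simp
qed

lemma A_card: "int (card {xs\<in>RS n. fd xs = g \<and> pk xs = q}) = A n q g"
proof -
  have "{xs\<in>RS n. fd xs = g \<and> pk xs = q} = {xs\<in>RS n. pk xs = q \<and> fd xs = g}" by auto
  then show ?thesis unfolding A_def by simp
qed

lemma RS_props:
  assumes "xs \<in> RS n"
  shows "distinct xs" "\<not> has_double_descent xs" "length xs = n" "\<forall>x\<in>set xs. x < Suc n"
proof -
  have p: "distinct xs" "set xs = {1..n}" "simsun n xs" using assms unfolding RS_def perms_of_def by auto
  show "distinct xs" using p by simp
  show "\<not> has_double_descent xs" using simsun_nodd[OF p(3)] p(2) by simp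
  show "length xs = n" using RS_length[OF assms] .
  show "\<forall>x\<in>set xs. x < Suc n" using p(2) by auto
qed

lemma A_Suc_sum:
  "A (Suc n) q g = (\<Sum>xs\<in>RS n. int (card {j\<in>{j. j \<le> n \<and> allowed xs j}.
       pk (ins xs j (Suc n)) = q \<and> fd (ins xs j (Suc n)) = g}))"
proof -
  let ?F = "\<lambda>(xs,j). ins xs j (Suc n)"
  let ?B = "\<lambda>xs. {j\<in>{j. j \<le> n \<and> allowed xs j}. pk (ins xs j (Suc n)) = q \<and> fd (ins xs j (Suc n)) = g}"
  have eq: "{ps\<in>RS (Suc n). pk ps = q \<and> fd ps = g} = ?F ` (SIGMA xs:RS n. ?B xs)"
    unfolding RS_Suc_eq by auto
  have inj: "inj_on ?F (SIGMA xs:RS n. ?B xs)"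
    by (rule inj_on_subset[OF inj_ins]) auto
  have "card {ps\<in>RS (Suc n). pk ps = q \<and> fd ps = g} = card (SIGMA xs:RS n. ?B xs)"
    unfolding eq by (rule card_image[OF inj])
  also have "\<dots> = (\<Sum>xs\<in>RS n. card (?B xs))"
    using finite_RS by (intro card_SigmaI) auto
  finally show ?thesis unfolding A_def by simp
qed

lemma recT:
  assumes n: "1 \<le> n"
  shows "A (Suc n) q True = (int q + 1) * A n q True + (int n - 2 * int q) * Am n q True + A n q False"
proof -
  have "A (Suc n) q True = (\<Sum>xs\<in>RS n.
           (if fd xs \<and> q = pk xs then int (pk xs) + 1 else 0)
         + (if fd xs \<and> q = pk xs + 1 then int n - 2 - 2 * int (pk xs) else 0)
         + (if \<not> fd xs \<and> q = pk xs then 1 else 0))"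
    unfolding A_Suc_sum
    by (rule sum.cong[OF refl], rule count_sigma(1)) (insert n, auto dest: RS_props)
  also have "\<dots> = (\<Sum>xs\<in>RS n.
           (if fd xs = True \<and> pk xs = q then int q + 1 else 0)
         + (if fd xs = True \<and> pk xs + 1 = q then int n - 2 * int q else 0)
         + (if fd xs = False \<and> pk xs = q then 1 else 0))"
    by (rule sum.cong) auto
  also have "\<dots> = (int q + 1) * A n q True + (int n - 2 * int q) * Am n q True + A n q False"
    by (simp add: sum.distrib sum_ind finite_RS A_card[of _ True, simplified] A_card[of _ False, simplified] Am_card[of _ True, simplified] Am_card[of _ False, simplified])
  finally show ?thesis .
qed

lemma recF:
  assumes n: "1 \<le> n"
  shows "A (Suc n) q False = Am n q True + (int q + 1) * A n q False + (int n + 1 - 2 * int q) * Am n q False"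
proof -
  have "A (Suc n) q False = (\<Sum>xs\<in>RS n.
           (if fd xs \<and> q = pk xs + 1 then 1 else 0)
         + (if \<not> fd xs \<and> q = pk xs then int (pk xs) + 1 else 0)
         + (if \<not> fd xs \<and> q = pk xs + 1 then int n - 1 - 2 * int (pk xs) else 0))"
    unfolding A_Suc_sum
    by (rule sum.cong[OF refl], rule count_sigma(2)) (insert n, auto dest: RS_props)
  also have "\<dots> = (\<Sum>xs\<in>RS n.
           (if fd xs = True \<and> pk xs + 1 = q then 1 else 0)
         + (if fd xs = False \<and> pk xs = q then int q + 1 else 0)
         + (if fd xs = False \<and> pk xs + 1 = q then int n + 1 - 2 * int q else 0))"
    by (rule sum.cong) auto
  also have "\<dots> = Am n q True + (int q + 1) * A n q False + (int n + 1 - 2 * int q) * Am n q False"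
    by (simp add: sum.distrib sum_ind finite_RS A_card[of _ True, simplified] A_card[of _ False, simplified] Am_card[of _ True, simplified] Am_card[of _ False, simplified])
  finally show ?thesis .
qed




lemma RS0: "RS 0 = {[]}"
  unfolding RS_def perms_of_def simsun_def by auto

lemma RS1: "RS 1 = {[1]}"
proof -
  have s: "(SIGMA xs:{[]}. {j. j \<le> 0 \<and> allowed xs j}) = {([], 0::nat)}"
    by (auto simp: allowed_def)
  have "RS (Suc 0) = {ins [] 0 (Suc 0)}"
    using RS_Suc_eq[of 0] unfolding RS0 s by simp
  then show ?thesis by (simp add: ins_def)
qed

lemma A1: "A 1 q g = (if q = 0 \<and> \<not> g then 1 else 0)"
proof -
  have pk1: "pk [1] = 0" unfolding pk_def by simp
  have fd1: "fd [1] = False" unfolding fd_def by simp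
  have "{xs\<in>RS 1. pk xs = q \<and> fd xs = g} = (if q = 0 \<and> \<not> g then {[1]} else {})"
    unfolding RS1 using pk1 fd1 by auto
  then show ?thesis unfolding A_def by simp
qed

lemma Inv: "1 \<le> n \<Longrightarrow> (int q + 1) * A n q True = (int n - 1 - 2 * int q) * A n q False"
proof (induction n arbitrary: q rule: nat_induct_at_least)
  case base
  show ?case unfolding A1 by simp
next
  case (Suc n)
  have E1: "(int q + 1) * A n q True = (int n - 1 - 2 * int q) * A n q False" by (rule Suc.IH)
  have E2: "int q * Am n q True = (int n + 1 - 2 * int q) * Am n q False"
  proof (cases q)
    case 0 then show ?thesis unfolding Am_def by simp
  next
    case (Suc r)
    have "(int r + 1) * A n r True = (int n - 1 - 2 * int r) * A n r False" by (rule Suc.IH)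
    then show ?thesis unfolding Am_def using Suc by (simp add: algebra_simps)
  qed
  have RT: "A (Suc n) q True = (int q + 1) * A n q True + (int n - 2 * int q) * Am n q True + A n q False"
    by (rule recT[OF Suc.hyps])
  have RF: "A (Suc n) q False = Am n q True + (int q + 1) * A n q False + (int n + 1 - 2 * int q) * Am n q False"
    by (rule recF[OF Suc.hyps])
  have "(int q + 1) * A (Suc n) q True - (int (Suc n) - 1 - 2 * int q) * A (Suc n) q False
     = (int q + 1) * ((int q + 1) * A n q True - (int n - 1 - 2 * int q) * A n q False)
       + (int n - 2 * int q) * (int q * Am n q True - (int n + 1 - 2 * int q) * Am n q False)"
    unfolding RT RF by (simp add: algebra_simps)
  also have "\<dots> = 0" using E1 E2 by simp
  finally show ?case by simp
qed

lemma AmInv: "1 \<le> n \<Longrightarrow> int q * Am n q True = (int n + 1 - 2 * int q) * Am n q False"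
proof (cases q)
  case 0 then show ?thesis unfolding Am_def by simp
next
  case (Suc r)
  assume n: "1 \<le> n"
  have "(int r + 1) * A n r True = (int n - 1 - 2 * int r) * A n r False" by (rule Inv[OF n])
  then show ?thesis unfolding Am_def using Suc by (simp add: algebra_simps)
qed

lemma P_split: "int (P n k) = A n k True + A n k False"
proof -
  have "{xs\<in>RS n. pk xs = k} = {xs\<in>RS n. pk xs = k \<and> fd xs = True} \<union> {xs\<in>RS n. pk xs = k \<and> fd xs = False}"
    by auto
  moreover have "card ({xs\<in>RS n. pk xs = k \<and> fd xs = True} \<union> {xs\<in>RS n. pk xs = k \<and> fd xs = False})
     = card {xs\<in>RS n. pk xs = k \<and> fd xs = True} + card {xs\<in>RS n. pk xs = k \<and> fd xs = False}"
    using finite_RS by (intro card_Un_disjoint) auto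
  ultimately show ?thesis unfolding P_def A_def by simp
qed

lemma S_split: "int (S n k) = A n k False + Am n k True"
proof -
  have "{xs\<in>RS n. des xs = k} = {xs\<in>RS n. fd xs = False \<and> pk xs = k} \<union> {xs\<in>RS n. fd xs = True \<and> pk xs + 1 = k}"
  proof -
    have "\<And>xs. xs \<in> RS n \<Longrightarrow> des xs = pk xs + (if fd xs then 1 else 0)"
      using des_pk RS_props by blast
    then show ?thesis by auto
  qed
  moreover have "card ({xs\<in>RS n. fd xs = False \<and> pk xs = k} \<union> {xs\<in>RS n. fd xs = True \<and> pk xs + 1 = k})
     = card {xs\<in>RS n. fd xs = False \<and> pk xs = k} + card {xs\<in>RS n. fd xs = True \<and> pk xs + 1 = k}"
    using finite_RS by (intro card_Un_disjoint) auto
  ultimately have "int (S n k) = int (card {xs\<in>RS n. fd xs = False \<and> pk xs = k})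
      + int (card {xs\<in>RS n. fd xs = True \<and> pk xs + 1 = k})" unfolding S_def by simp
  then show ?thesis using A_card[of n False k, simplified] Am_card[of n True k, simplified] by simp
qed

lemma part1: "1 \<le> n \<Longrightarrow> int (P (Suc n) k) = (int n + 1 - int k) * int (S n k)"
proof -
  assume n: "1 \<le> n"
  have E1: "(int k + 1) * A n k True = (int n - 1 - 2 * int k) * A n k False" by (rule Inv[OF n])
  have E2: "int k * Am n k True = (int n + 1 - 2 * int k) * Am n k False" by (rule AmInv[OF n])
  have RT: "A (Suc n) k True = (int k + 1) * A n k True + (int n - 2 * int k) * Am n k True + A n k False"
    by (rule recT[OF n])
  have RF: "A (Suc n) k False = Am n k True + (int k + 1) * A n k False + (int n + 1 - 2 * int k) * Am n k False"
    by (rule recF[OF n])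
  have "(A (Suc n) k True + A (Suc n) k False) - (int n + 1 - int k) * (A n k False + Am n k True)
     = ((int k + 1) * A n k True - (int n - 1 - 2 * int k) * A n k False)
       - (int k * Am n k True - (int n + 1 - 2 * int k) * Am n k False)"
    unfolding RT RF by (simp add: algebra_simps)
  also have "\<dots> = 0" using E1 E2 by simp
  finally show ?thesis unfolding P_split S_split by simp
qed




lemma part3:
  assumes n: "1 \<le> n" and k: "k \<le> n div 2"
  shows "real (P (n + 1) k) =
            (real k + 1) * (real n - real k + 1) / (real n - real k) * real (P n k)
            + (real n - 2 * real k + 1) * real (Pprev n k)"
proof -
  have kn: "k < n" using n k by linarith
  have I1: "int (P (Suc n) k) = (int n + 1 - int k) * A n k False + (int n + 1 - int k) * Am n k True"
    using part1[OF n, of k] unfolding S_split by (simp add: algebra_simps)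
  have I2: "(int n - int k) * A n k False = (int k + 1) * int (P n k)"
    using Inv[OF n, of k] unfolding P_split by (simp add: algebra_simps)
  have I3: "(int n + 1 - int k) * Am n k True = (int n + 1 - 2 * int k) * int (Pprev n k)"
  proof (cases k)
    case 0 then show ?thesis unfolding Am_def Pprev_def by simp
  next
    case (Suc r)
    have E: "(int r + 1) * A n r True = (int n - 1 - 2 * int r) * A n r False" by (rule Inv[OF n])
    have pp: "int (Pprev n k) = A n r True + A n r False" unfolding Pprev_def using Suc P_split by simp
    have am: "Am n k True = A n r True" unfolding Am_def using Suc by simp
    have "int k * ((int n + 1 - int k) * A n r True - (int n + 1 - 2 * int k) * (A n r True + A n r False))
        = int k * (int k * A n r True - (int n + 1 - 2 * int k) * A n r False)"
      by (simp add: algebra_simps)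
    also have "int k * A n r True - (int n + 1 - 2 * int k) * A n r False = 0"
      using E Suc by (simp add: algebra_simps)
    finally have "int k * ((int n + 1 - int k) * A n r True - (int n + 1 - 2 * int k) * (A n r True + A n r False)) = 0"
      by simp
    then have "(int n + 1 - int k) * A n r True - (int n + 1 - 2 * int k) * (A n r True + A n r False) = 0"
      using Suc by simp
    then show ?thesis unfolding am pp by simp
  qed
  define a where "a = real_of_int (A n k False)"
  define b where "b = real_of_int (Am n k True)"
  have R1: "real (P (n + 1) k) = (real n + 1 - real k) * a + (real n + 1 - real k) * b"
    using arg_cong[OF I1, of real_of_int] unfolding a_def b_def by simp
  have R2: "(real n - real k) * a = (real k + 1) * real (P n k)"
    using arg_cong[OF I2, of real_of_int] unfolding a_def by simp
  have R3: "(real n + 1 - real k) * b = (real n + 1 - 2 * real k) * real (Pprev n k)"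
    using arg_cong[OF I3, of real_of_int] unfolding b_def by simp
  have nz: "real n - real k \<noteq> 0" using kn by simp
  have aa: "a = (real k + 1) * real (P n k) / (real n - real k)"
    using R2 nz by (simp add: field_simps)
  show ?thesis unfolding R1 R3 unfolding aa using nz by (simp add: field_simps)
qed

lemma A0F: "1 \<le> n \<Longrightarrow> A n 0 False = 1"
proof (induction n rule: nat_induct_at_least)
  case base show ?case unfolding A1 by simp
next
  case (Suc n) then show ?case using recF[OF Suc.hyps(1), of 0] unfolding Am_def by simp
qed

lemma part4: "1 \<le> n \<Longrightarrow> P n 0 = n"
proof -
  assume n: "1 \<le> n"
  have "A n 0 True = int n - 1" using Inv[OF n, of 0] A0F[OF n] by simp
  then have "int (P n 0) = int n" unfolding P_split using A0F[OF n] by simp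
  then show ?thesis by simp
qed

lemma A1F: "1 \<le> n \<Longrightarrow> A n 1 False = 2 ^ n - 2 * int n"
proof (induction n rule: nat_induct_at_least)
  case base show ?case unfolding A1 by simp
next
  case (Suc n)
  have "A n 0 True = int n - 1" using Inv[OF Suc.hyps(1), of 0] A0F[OF Suc.hyps(1)] by simp
  then show ?case using recF[OF Suc.hyps(1), of 1] Suc.IH A0F[OF Suc.hyps(1)] unfolding Am_def
    by (simp add: algebra_simps)
qed

lemma part5: "1 \<le> n \<Longrightarrow> int (P n 1) = (int n - 1) * (2 ^ (n - 1) - int n)"
proof -
  assume n: "1 \<le> n"
  have E: "2 * A n 1 True = (int n - 3) * A n 1 False" using Inv[OF n, of 1] by simp
  have p2: "(2::int) ^ n = 2 * 2 ^ (n - 1)" using n by (cases n) auto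
  have "2 * int (P n 1) = 2 * A n 1 True + 2 * A n 1 False" unfolding P_split by simp
  also have "\<dots> = (int n - 1) * A n 1 False" using E by (simp add: algebra_simps)
  also have "\<dots> = 2 * ((int n - 1) * (2 ^ (n - 1) - int n))" unfolding A1F[OF n] p2 by (simp add: algebra_simps)
  finally show ?thesis by simp
qed

lemma coeff_S_poly: "coeff (S_poly n) k = (if k \<le> n then int (S n k) else 0)"
  unfolding S_poly_def by (simp add: coeff_sum)

lemma coeff_P_poly: "coeff (P_poly n) k = (if k \<le> n then int (P n k) else 0)"
  unfolding P_poly_def by (simp add: coeff_sum)

lemma part2:
  assumes n: "1 \<le> n"
  shows "P_poly (n + 1) = smult (int n + 1) (S_poly n) - [:0, 1:] * pderiv (S_poly n)"
proof (rule poly_eqI)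
  fix k
  have x: "[:0, 1:] * pderiv (S_poly n) = pCons 0 (pderiv (S_poly n))" by simp
  have r: "coeff (smult (int n + 1) (S_poly n) - [:0, 1:] * pderiv (S_poly n)) k
      = (int n + 1 - int k) * coeff (S_poly n) k"
    unfolding x by (cases k) (simp_all add: coeff_pderiv algebra_simps)
  show "coeff (P_poly (n + 1)) k = coeff (smult (int n + 1) (S_poly n) - [:0, 1:] * pderiv (S_poly n)) k"
    unfolding r coeff_P_poly coeff_S_poly using part1[OF n, of k] by auto
qed

theorem theorem6:
  shows "(\<forall>n\<ge>1. \<forall>k. int (P (n + 1) k) = (int n + 1 - int k) * int (S n k))
    \<and> (\<forall>n\<ge>1. P_poly (n + 1) = smult (int n + 1) (S_poly n) - [:0, 1:] * pderiv (S_poly n))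
    \<and> (\<forall>n\<ge>1. \<forall>k\<le>n div 2.
          real (P (n + 1) k) =
            (real k + 1) * (real n - real k + 1) / (real n - real k) * real (P n k)
            + (real n - 2 * real k + 1) * real (Pprev n k))
    \<and> (\<forall>n\<ge>1. P n 0 = n)
    \<and> (\<forall>n\<ge>1. int (P n 1) = (int n - 1) * (2 ^ (n - 1) - int n))"
  using part1 part2 part3 part4 part5 by simp


end
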